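(* There exists $\varepsilon_0 > 0$ such that if $\Omega \subset \mathbb{R}^2$ is a convex domain with area $|\Omega| = 1$ and $\mathcal{A}(\Omega) \leq \varepsilon_0$, and $u$ solves $-\Delta u = 1$ in $\Omega$ with $u = 0$ on $\partial\Omega$, then $$ \|\nabla u\|_{L^{\infty}(\Omega)} \leq 0.39 < \frac{1}{\sqrt{2\pi}}.$$
   Context: The Fraenkel asymmetry of $\Omega$ is $\mathcal{A}(\Omega) = \inf_{B} |B \,\Delta\, \Omega| / |\Omega|$, where the infimum is over all disks $B \subset \mathbb{R}^2$ with $|B| = |\Omega|$ and $B \,\Delta\, \Omega = (B\setminus\Omega)\cup(\Omega\setminus B)$ is the symmetric difference. *)

theory Defs
  imports "HOL-Analysis.Analysis"
begin

abbreviation area :: "(real^2) set \<Rightarrow> real" where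
  "area S \<equiv> measure lebesgue S"

definition fraenkel_asymmetry :: "(real^2) set \<Rightarrow> real" where
  "fraenkel_asymmetry \<Omega> =
     Inf { area ((B - \<Omega>) \<union> (\<Omega> - B)) / area \<Omega> | B.
             (\<exists>c r. r > 0 \<and> B = ball c r) \<and> area B = area \<Omega> }"

text \<open>H x is the derivative of the gradient at x (the Hessian); the Laplacian is its trace.\<close>
definition torsion_solution ::
  "(real^2) set \<Rightarrow> (real^2 \<Rightarrow> real) \<Rightarrow> (real^2 \<Rightarrow> real^2) \<Rightarrow> bool" where
  "torsion_solution \<Omega> u g \<longleftrightarrow>
     continuous_on (closure \<Omega>) u \<and>
     (\<forall>x\<in>frontier \<Omega>. u x = 0) \<and>
     (\<forall>x\<in>\<Omega>. (u has_derivative (\<lambda>h. g x \<bullet> h)) (at x)) \<and>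
     (\<exists>H. (\<forall>x\<in>\<Omega>. (g has_derivative H x) (at x)) \<and>
          (\<forall>i\<in>Basis. \<forall>j\<in>Basis. continuous_on \<Omega> (\<lambda>x. H x i \<bullet> j)) \<and>
          (\<forall>x\<in>\<Omega>. - (\<Sum>i\<in>Basis. H x i \<bullet> i) = 1))"

end

theory Submission
  imports Defs
begin


lemma second_deriv_max:
  fixes \<phi> \<psi> :: "real \<Rightarrow> real"
  assumes d: "d > 0"
  and der: "\<And>\<tau>. \<bar>\<tau>\<bar> < d \<Longrightarrow> (\<phi> has_real_derivative \<psi> \<tau>) (at \<tau>)"
  and der2: "(\<psi> has_real_derivative a) (at 0)"
  and mx: "\<And>\<tau>. \<bar>\<tau>\<bar> < d \<Longrightarrow> \<phi> \<tau> \<le> \<phi> 0"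
  shows "a \<le> 0"
proof (rule ccontr)
  assume "\<not> a \<le> 0"
  hence a: "a > 0" by simp
  have psi0: "\<psi> 0 = 0"
    using DERIV_local_max[OF der[of 0] d] mx d by force
  obtain d' where d': "d' > 0" "\<And>h. h > 0 \<Longrightarrow> h < d' \<Longrightarrow> \<psi> 0 < \<psi> (0 + h)"
    using DERIV_pos_inc_right[OF der2 a] by blast
  define \<tau> where "\<tau> = min (d/2) (d'/2)"
  have tp: "\<tau> > 0" "\<tau> < d" "\<tau> < d'" using d d'(1) by (auto simp: \<tau>_def)
  obtain z where z: "0 < z" "z < \<tau>" "\<phi> \<tau> - \<phi> 0 = (\<tau> - 0) * \<psi> z"
    using MVT2[of 0 \<tau> \<phi> \<psi>] tp der by force
  have "\<psi> z > 0" using d'(2)[of z] z tp psi0 by simp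
  hence "\<tau> * \<psi> z > 0" using tp by simp
  hence "\<phi> \<tau> > \<phi> 0" using z by simp
  thus False using mx[of \<tau>] tp by simp
qed

lemma max_principle:
  fixes U :: "(real^2) set" and f :: "real^2 \<Rightarrow> real" and G :: "real^2 \<Rightarrow> real^2"
    and K :: "real^2 \<Rightarrow> real^2 \<Rightarrow> real^2"
  assumes U: "open U" "bounded U" and cf: "continuous_on (closure U) f"
   and df: "\<And>x. x\<in>U \<Longrightarrow> (f has_derivative (\<lambda>h. G x \<bullet> h)) (at x)"
   and dG: "\<And>x. x\<in>U \<Longrightarrow> (G has_derivative K x) (at x)"
   and lap: "\<And>x. x\<in>U \<Longrightarrow> (\<Sum>i\<in>Basis. K x i \<bullet> i) \<ge> 0"
   and bd: "\<And>y. y\<in>frontier U \<Longrightarrow> f y \<le> M"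
   and x: "x \<in> U"
  shows "f x \<le> M"
proof (rule ccontr)
  assume "\<not> f x \<le> M"
  hence fx: "f x > M" by simp
  obtain D where D: "\<And>y. y \<in> closure U \<Longrightarrow> norm y \<le> D"
    using bounded_closure[OF U(2)] unfolding bounded_iff by blast
  define \<epsilon> where "\<epsilon> = (f x - M) / (2 * (D^2 + 1))"
  have D2: "D^2 + 1 > 0" by (smt (verit) zero_le_power2)
  have ep: "\<epsilon> > 0" unfolding \<epsilon>_def using fx D2 by simp
  have epD: "\<epsilon> * D^2 < f x - M"
  proof -
    have "\<epsilon> * D^2 = (f x - M) * (D^2 / (2 * (D^2 + 1)))" unfolding \<epsilon>_def by simp
    also have "\<dots> < (f x - M) * 1"
      using fx D2 by (intro mult_strict_left_mono) (auto simp: field_simps)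
    finally show ?thesis by simp
  qed
  define fe where "fe y = f y + \<epsilon> * (y \<bullet> y)" for y
  have cfe: "continuous_on (closure U) fe"
    unfolding fe_def by (intro continuous_intros cf)
  have cpt: "compact (closure U)" using U(2) by (simp add: compact_closure)
  have ne: "closure U \<noteq> {}" using x closure_subset by blast
  obtain z where z: "z \<in> closure U" "\<And>y. y \<in> closure U \<Longrightarrow> fe y \<le> fe z"
    using continuous_attains_sup[OF cpt ne cfe] by blast
  have "fe x \<ge> f x" unfolding fe_def using ep by simp
  hence fez: "fe z \<ge> f x" using z(2)[of x] x closure_subset by force
  have "z \<notin> frontier U"
  proof
    assume zf: "z \<in> frontier U"
    have "norm z \<le> D" using D z(1) by blast
    hence "z \<bullet> z \<le> D^2"
      by (metis norm_ge_zero power_mono power2_norm_eq_inner)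
    hence "\<epsilon> * (z \<bullet> z) \<le> \<epsilon> * D^2" using ep by (simp add: mult_left_mono)
    hence "fe z < f x" using bd[OF zf] epD unfolding fe_def by linarith
    thus False using fez by simp
  qed
  hence zU: "z \<in> U" using z(1) U(1) by (simp add: frontier_def interior_open)
  obtain r where r: "r > 0" "ball z r \<subseteq> U" using U(1) zU open_contains_ball by blast
  have key: "K z i \<bullet> i + 2 * \<epsilon> \<le> 0" if i: "i \<in> Basis" for i
  proof -
    have ni: "norm i = 1" using i by simp
    have ii: "i \<bullet> i = 1" using i by simp
    have inU: "z + \<tau> *\<^sub>R i \<in> U" if "\<bar>\<tau>\<bar> < r" for \<tau>
      using r that ni by (intro subsetD[OF r(2)]) (simp add: dist_norm)
    define \<psi> where "\<psi> \<tau> = (G (z + \<tau> *\<^sub>R i) + (2 * \<epsilon>) *\<^sub>R (z + \<tau> *\<^sub>R i)) \<bullet> i" for \<tau>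
    have dfe: "(fe has_derivative (\<lambda>h. G y \<bullet> h + \<epsilon> * (2 * (y \<bullet> h)))) (at y)" if "y \<in> U" for y
    proof -
      have "((\<lambda>y. y \<bullet> y) has_derivative (\<lambda>h. y \<bullet> h + h \<bullet> y)) (at y)"
        by (rule has_derivative_inner[OF has_derivative_ident has_derivative_ident])
      hence "((\<lambda>y. \<epsilon> * (y \<bullet> y)) has_derivative (\<lambda>h. \<epsilon> * (y \<bullet> h + h \<bullet> y))) (at y)"
        by (rule has_derivative_mult_right)
      from has_derivative_add[OF df[OF that] this] show ?thesis
        unfolding fe_def by (simp add: inner_commute algebra_simps)
    qed
    have der: "((\<lambda>\<tau>. fe (z + \<tau> *\<^sub>R i)) has_real_derivative \<psi> \<tau>) (at \<tau>)" if "\<bar>\<tau>\<bar> < r" for \<tau>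
    proof -
      have l: "((\<lambda>\<tau>. z + \<tau> *\<^sub>R i) has_derivative (\<lambda>t. t *\<^sub>R i)) (at \<tau>)"
        by (auto intro!: derivative_eq_intros)
      have "((fe \<circ> (\<lambda>\<tau>. z + \<tau> *\<^sub>R i)) has_derivative
         ((\<lambda>h. G (z + \<tau> *\<^sub>R i) \<bullet> h + \<epsilon> * (2 * ((z + \<tau> *\<^sub>R i) \<bullet> h))) \<circ> (\<lambda>t. t *\<^sub>R i))) (at \<tau>)"
        by (rule diff_chain_at[OF l dfe[OF inU[OF that]]])
      from this[unfolded o_def] show ?thesis unfolding has_field_derivative_def
        by (rule has_derivative_eq_rhs) (auto simp: \<psi>_def fun_eq_iff algebra_simps inner_add_left)
    qed
    have lk: "linear (K z)" using dG[OF zU] has_derivative_linear by blast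
    have der2: "(\<psi> has_real_derivative (K z i \<bullet> i + 2 * \<epsilon>)) (at 0)"
    proof -
      have l: "((\<lambda>\<tau>. z + \<tau> *\<^sub>R i) has_derivative (\<lambda>t. t *\<^sub>R i)) (at 0)"
        by (auto intro!: derivative_eq_intros)
      have dG': "(G has_derivative K z) (at (z + 0 *\<^sub>R i))" using dG[OF zU] by simp
      have "((G \<circ> (\<lambda>\<tau>. z + \<tau> *\<^sub>R i)) has_derivative (K z \<circ> (\<lambda>t. t *\<^sub>R i))) (at 0)"
        by (rule diff_chain_at[OF l dG'])
      hence a: "((\<lambda>\<tau>. G (z + \<tau> *\<^sub>R i) + (2 * \<epsilon>) *\<^sub>R (z + \<tau> *\<^sub>R i)) has_derivative
          (\<lambda>t. K z (t *\<^sub>R i) + (2 * \<epsilon>) *\<^sub>R (t *\<^sub>R i))) (at 0)"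
        by (auto intro!: derivative_eq_intros simp: o_def)
      have "(\<psi> has_derivative (\<lambda>t. (K z (t *\<^sub>R i) + (2 * \<epsilon>) *\<^sub>R (t *\<^sub>R i)) \<bullet> i)) (at 0)"
        unfolding \<psi>_def by (rule has_derivative_inner_left[OF a])
      thus ?thesis unfolding has_field_derivative_def
        by (rule has_derivative_eq_rhs)
          (auto simp: fun_eq_iff linear_scale[OF lk] inner_add_left algebra_simps ii)
    qed
    have mx: "fe (z + \<tau> *\<^sub>R i) \<le> fe (z + 0 *\<^sub>R i)" if "\<bar>\<tau>\<bar> < r" for \<tau>
      using z(2)[OF subsetD[OF closure_subset inU[OF that]]] by simp
    show ?thesis
      by (rule second_deriv_max[OF r(1) der der2 mx])
  qed
  have "(\<Sum>i\<in>(Basis::(real^2) set). K z i \<bullet> i + 2 * \<epsilon>) \<le> 0"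
    by (rule sum_nonpos) (use key in blast)
  hence "(\<Sum>i\<in>(Basis::(real^2) set). K z i \<bullet> i) + 2 * \<epsilon> * 2 \<le> 0"
    by (simp add: sum.distrib)
  thus False using lap[OF zU] ep by linarith
qed

definition bv :: "real^2 \<Rightarrow> real^2 \<Rightarrow> real \<Rightarrow> real \<Rightarrow> real^2 \<Rightarrow> real" where
  "bv c' z0 R s y = (R^2 - (y - c') \<bullet> (y - c')) / 4 + (s^2/2) * ln (((y - z0) \<bullet> (y - z0)) / s^2)"
definition bG :: "real^2 \<Rightarrow> real^2 \<Rightarrow> real \<Rightarrow> real \<Rightarrow> real^2 \<Rightarrow> real^2" where
  "bG c' z0 R s y = (-(1/2)) *\<^sub>R (y - c') + (s^2 / ((y - z0) \<bullet> (y - z0))) *\<^sub>R (y - z0)"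
definition bK :: "real^2 \<Rightarrow> real^2 \<Rightarrow> real \<Rightarrow> real \<Rightarrow> real^2 \<Rightarrow> real^2 \<Rightarrow> real^2" where
  "bK c' z0 R s y h = (-(1/2)) *\<^sub>R h + (s^2 / ((y - z0) \<bullet> (y - z0))) *\<^sub>R h
     - (2 * s^2 * ((y - z0) \<bullet> h) / ((y - z0) \<bullet> (y - z0))^2) *\<^sub>R (y - z0)"

lemma aux1:
  fixes a b x :: "real^2"
  assumes "N > 0" "s4 \<noteq> 0"
  shows "(- (a \<bullet> x * 4) - a \<bullet> x * 4) / 16 + s2 * s4 * (b \<bullet> x + b \<bullet> x) / (2 * (s4 * N))
     = ((s2 / N) *\<^sub>R b - (1/2) *\<^sub>R a) \<bullet> x"
  using assms by (simp add: inner_diff_left field_simps)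

lemma bv_deriv:
  assumes "y \<noteq> z0" "s \<noteq> 0"
  shows "(bv c' z0 R s has_derivative (\<lambda>h. bG c' z0 R s y \<bullet> h)) (at y)"
proof -
  have N: "(y - z0) \<bullet> (y - z0) > 0" using assms by simp
  show ?thesis unfolding bv_def[abs_def] bG_def
    apply (rule has_derivative_eq_rhs)
     apply (auto intro!: derivative_eq_intros simp: N assms)[1]
    apply (simp add: fun_eq_iff)
    apply (rule allI)
    subgoal for x
    proof -
      have c1: "x \<bullet> (y - c') = (y - c') \<bullet> x" "x \<bullet> (y - z0) = (y - z0) \<bullet> x" by (simp_all add: inner_commute)
      have c2: "s^6 = s^2 * s^4" by (simp add: power_add[symmetric])
      have s4: "s^4 \<noteq> 0" using assms by simp
      show ?thesis unfolding c1 c2 by (rule aux1[OF N s4])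
    qed
    done
qed

lemma bG_deriv:
  assumes "y \<noteq> z0" "s \<noteq> 0"
  shows "(bG c' z0 R s has_derivative bK c' z0 R s y) (at y)"
proof -
  have N: "(y - z0) \<bullet> (y - z0) > 0" using assms by simp
  show ?thesis unfolding bG_def[abs_def] bK_def[abs_def]
    apply (rule has_derivative_eq_rhs)
     apply (auto intro!: derivative_eq_intros simp: N assms)[1]
    apply (rule ext)
    subgoal for h
    proof -
      have c1: "h \<bullet> (y - z0) = (y - z0) \<bullet> h" by (simp add: inner_commute)
      have c3: "(0 * ((y - z0) \<bullet> (y - z0)) - s^2 * ((y - z0) \<bullet> h + (y - z0) \<bullet> h)) /
          ((y - z0) \<bullet> (y - z0) * ((y - z0) \<bullet> (y - z0)))
          = - (2 * s^2 * ((y - z0) \<bullet> h) / ((y - z0) \<bullet> (y - z0))^2)"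
        by (simp add: power2_eq_square)
      show ?thesis unfolding diff_zero c1 c3 by (simp add: algebra_simps)
    qed
    done
qed

lemma bK_trace:
  assumes "y \<noteq> z0"
  shows "(\<Sum>i\<in>Basis. bK c' z0 R s y i \<bullet> i) = -1"
proof -
  define w where "w = y - z0"
  have N: "w \<bullet> w > 0" using assms by (simp add: w_def)
  have ww: "(\<Sum>i\<in>(Basis::(real^2) set). (w \<bullet> i) * (w \<bullet> i)) = w \<bullet> w"
    by (rule euclidean_inner[symmetric])
  have "(\<Sum>i\<in>Basis. bK c' z0 R s y i \<bullet> i) =
     (\<Sum>i\<in>(Basis::(real^2) set). (-(1/2)) + s^2 / (w \<bullet> w) - (2 * s^2 / (w \<bullet> w)^2) * ((w \<bullet> i) * (w \<bullet> i)))"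
    by (rule sum.cong) (auto simp: bK_def w_def[symmetric] inner_diff_left inner_add_left inner_commute inner_diff_right inner_add_right)
  also have "\<dots> = 2 * (-(1/2) + s^2 / (w \<bullet> w)) - (2 * s^2 / (w \<bullet> w)^2) * (w \<bullet> w)"
    by (simp add: sum_subtractf sum_distrib_left[symmetric] ww sum_divide_distrib[symmetric])
  also have "\<dots> = -1" using N by (simp add: field_simps power2_eq_square)
  finally show ?thesis .
qed

lemma ln_lower: "(y::real) > 0 \<Longrightarrow> ln y \<ge> 1 - 1 / y"
  using ln_le_minus_one[of "1/y"] by (simp add: ln_div)

lemma core:
  fixes t q b R1 l0 :: real
  assumes t: "t \<ge> 0" and q: "q \<ge> 0" and l0: "l0 > 0" and bR: "b \<le> R1" and tR: "t \<le> 2*R1"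
    and ineq: "q^2 + t^2 \<le> l0^2 + 2*l0*q + 2*t*b"
  shows "0 \<le> (2*(400*R1/359)*t - (q^2 + t^2))/4
      + ((20*l0)^2/2) * ln ((q^2 + t^2 + 2*(20*l0)*t + (20*l0)^2)/(20*l0)^2)"
proof -
  define s where "s = 20 * l0"
  have s: "s > 0" using l0 by (simp add: s_def)
  have R1: "R1 \<ge> 0" using t tR by linarith
  have num: "q^2 + t^2 + 2* s*t + s^2 \<ge> s^2" using t s by (simp add: add_nonneg_nonneg)
  have lnpos: "ln ((q^2 + t^2 + 2* s*t + s^2)/s^2) \<ge> 0"
    using num s by (simp add: ln_ge_zero_iff le_divide_eq)
  show ?thesis
  proof (cases "q \<ge> s")
    case True
    hence "l0 \<le> q/20" by (simp add: s_def)
    have m: "(20*l0)*(20*l0) \<le> q*q" using True l0 by (intro mult_mono) (auto simp: s_def)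
    have m2: "(20*l0)*q \<le> q*q" using True q by (intro mult_right_mono) (auto simp: s_def)
    have a: "l0^2 \<le> q^2/400" using m by (simp add: power2_eq_square)
    have b: "2*l0*q \<le> q^2/10" using m2 by (simp add: power2_eq_square)
    have "(359/400)*(q^2 + t^2) \<le> 2*t*R1"
    proof -
      have "2*t*b \<le> 2*t*R1" using t bR by (simp add: mult_left_mono)
      moreover have "t^2 \<ge> 0" by simp
      ultimately have h: "359/400*q^2 + t^2 \<le> 2*t*R1" using ineq a b by linarith
      have "359/400*(q^2 + t^2) = 359/400*q^2 + 359/400*t^2" by (simp add: algebra_simps)
      thus ?thesis using h \<open>t^2 \<ge> 0\<close> by linarith
    qed
    hence "(400/359)*((359/400)*(q^2 + t^2)) \<le> (400/359)*(2*t*R1)" by (rule mult_left_mono) simp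
    hence "q^2 + t^2 \<le> 2*(400*R1/359)*t" by (simp add: algebra_simps)
    hence "0 \<le> (2*(400*R1/359)*t - (q^2 + t^2))/4" by simp
    moreover have "0 \<le> ((20*l0)^2/2) * ln ((q^2 + t^2 + 2*(20*l0)*t + (20*l0)^2)/(20*l0)^2)"
      using lnpos by (simp add: s_def)
    ultimately show ?thesis by linarith
  next
    case False
    hence qs: "q^2 < s^2" using q s by (simp add: power_strict_mono)
    define x where "x = q^2/s^2"
    have x: "0 \<le> x" "x < 1" using qs s by (auto simp: x_def)
    have "(q^2 + t^2 + 2* s*t + s^2)/s^2 \<ge> 1 + x"
      using s t by (simp add: x_def field_simps add_nonneg_nonneg)
    hence "ln ((q^2 + t^2 + 2* s*t + s^2)/s^2) \<ge> ln (1 + x)" using x by simp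
    moreover have "ln (1 + x) \<ge> 1 - 1/(1+x)" using ln_lower[of "1+x"] x by simp
    moreover have "1 - 1/(1+x) \<ge> x/2"
    proof -
      have xx: "x*x \<le> x" using x by (intro mult_right_le_one_le) auto
      show ?thesis using x xx by (simp add: field_simps)
    qed
    ultimately have L: "ln ((q^2 + t^2 + 2* s*t + s^2)/s^2) \<ge> x/2" by linarith
    have "(s^2/2) * (x/2) = q^2/4" using s by (simp add: x_def)
    hence L2: "(s^2/2) * ln ((q^2 + t^2 + 2* s*t + s^2)/s^2) \<ge> q^2/4"
      using L s by (metis divide_pos_pos mult_left_mono zero_less_numeral zero_less_power less_imp_le)
    have "t^2 \<le> 2*(400*R1/359)*t"
    proof -
      have "t * t \<le> (2*(400*R1/359)) * t" using t tR R1 by (intro mult_right_mono) auto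
      thus ?thesis by (simp add: power2_eq_square mult.commute)
    qed
    hence X: "0 \<le> (2*(400*R1/359)*t - t^2)/4" by simp
    have eq: "(2*(400*R1/359)*t - (q^2 + t^2))/4 + q^2/4 = (2*(400*R1/359)*t - t^2)/4"
      by (simp add: field_simps)
    have e1: "0 \<le> (2*(400*R1/359)*t - (q^2 + t^2))/4 + q^2/4" by (subst eq) (rule X)
    show ?thesis using L2 e1 unfolding s_def by linarith
  qed
qed

lemma upper_bd:
  fixes tt D2 ss RR :: real
  assumes "tt \<ge> 0" "D2 \<ge> 0" "ss > 0"
  shows "(2*RR*tt - D2)/4 + (ss^2/2) * ln ((D2 + 2* ss*tt + ss^2)/ss^2) \<le> (RR/2 + ss) * tt + D2/2"
proof -
  have pos: "(D2 + 2* ss*tt + ss^2)/ss^2 > 0" using assms by (simp add: add_nonneg_pos)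
  have "ln ((D2 + 2* ss*tt + ss^2)/ss^2) \<le> (D2 + 2* ss*tt + ss^2)/ss^2 - 1" by (rule ln_le_minus_one[OF pos])
  also have "\<dots> = (D2 + 2* ss*tt)/ss^2" using assms by (simp add: field_simps)
  finally have lnb: "ln ((D2 + 2* ss*tt + ss^2)/ss^2) \<le> (D2 + 2* ss*tt)/ss^2" .
  have "(ss^2/2) * ln ((D2 + 2* ss*tt + ss^2)/ss^2) \<le> (ss^2/2) * ((D2 + 2* ss*tt)/ss^2)"
    using mult_left_mono[OF lnb, of "ss^2/2"] by simp
  also have "\<dots> = D2/2 + ss*tt" using assms by (simp add: field_simps power2_eq_square)
  finally have "(ss^2/2) * ln ((D2 + 2* ss*tt + ss^2)/ss^2) \<le> D2/2 + ss*tt" .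
  moreover have "(RR/2 + ss)*tt = RR*tt/2 + ss*tt" by (simp add: algebra_simps)
  moreover have "(2*RR*tt - D2)/4 = RR*tt/2 - D2/4" by simp
  ultimately show ?thesis using assms by linarith
qed

lemma bv_eq:
  assumes "\<nu> \<bullet> \<nu> = 1"
  shows "bv (p + R *\<^sub>R \<nu>) (p - s *\<^sub>R \<nu>) R s y =
    (2*R*((y-p)\<bullet>\<nu>) - (y-p)\<bullet>(y-p))/4 + (s^2/2) * ln (((y-p)\<bullet>(y-p) + 2* s*((y-p)\<bullet>\<nu>) + s^2)/s^2)"
proof -
  define d where "d = y - p"
  have 1: "y - (p + R *\<^sub>R \<nu>) = d - R *\<^sub>R \<nu>" "y - (p - s *\<^sub>R \<nu>) = d + s *\<^sub>R \<nu>" by (auto simp: d_def)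
  have 2: "(d - R *\<^sub>R \<nu>) \<bullet> (d - R *\<^sub>R \<nu>) = d \<bullet> d - 2*R*(d \<bullet> \<nu>) + R^2"
    using assms by (simp add: inner_diff_left inner_diff_right inner_commute power2_eq_square algebra_simps)
  have 3: "(d + s *\<^sub>R \<nu>) \<bullet> (d + s *\<^sub>R \<nu>) = d \<bullet> d + 2* s*(d \<bullet> \<nu>) + s^2"
    using assms by (simp add: inner_add_left inner_add_right inner_commute power2_eq_square algebra_simps)
  show ?thesis unfolding bv_def 1 2 3 by (simp add: d_def)
qed


lemma barrier_nonneg:
  fixes p c y \<nu> :: "real^2"
  assumes nu: "norm \<nu> = 1" and ty: "(y - p) \<bullet> \<nu> \<ge> 0" and yc: "norm (y - c) \<le> R1"
    and bb: "(c - p) \<bullet> \<nu> \<ge> b0" "b0 \<ge> 0" and cp: "norm (c - p) \<le> R1"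
    and Rl: "R1^2 - b0^2 \<le> l0^2" and l0: "l0 > 0"
  shows "bv (p + (400*R1/359) *\<^sub>R \<nu>) (p - (20*l0) *\<^sub>R \<nu>) (400*R1/359) (20*l0) y \<ge> 0"
proof -
  have nn: "\<nu> \<bullet> \<nu> = 1" using nu by (simp add: dot_square_norm)
  define d where "d = y - p"
  define e where "e = c - p"
  define t where "t = d \<bullet> \<nu>"
  define b where "b = e \<bullet> \<nu>"
  define dp where "dp = d - t *\<^sub>R \<nu>"
  define ep where "ep = e - b *\<^sub>R \<nu>"
  define q where "q = norm dp"
  have dpdp: "dp \<bullet> dp = d \<bullet> d - t^2"
    using nn by (simp add: dp_def t_def inner_diff_left inner_diff_right inner_commute power2_eq_square)
  have epep: "ep \<bullet> ep = e \<bullet> e - b^2"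
    using nn by (simp add: ep_def b_def inner_diff_left inner_diff_right inner_commute power2_eq_square)
  have q2: "q^2 = d \<bullet> d - t^2" using dpdp by (simp add: q_def power2_norm_eq_inner)
  have de: "d \<bullet> e = t * b + dp \<bullet> ep"
    using nn by (simp add: dp_def ep_def t_def b_def inner_diff_left inner_diff_right inner_commute)
  have ee: "e \<bullet> e \<le> R1^2"
    using cp by (metis e_def norm_ge_zero power2_norm_eq_inner power_mono)
  have bge: "b \<ge> b0" using bb by (simp add: b_def e_def)
  have b2: "b0^2 \<le> b^2" using bge bb(2) by (simp add: power_mono)
  have "ep \<bullet> ep \<le> l0^2" using epep ee b2 Rl by linarith
  hence nep: "norm ep \<le> l0" using l0
    by (metis power2_norm_eq_inner abs_of_pos abs_le_square_iff abs_norm_cancel)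
  have "dp \<bullet> ep \<le> q * l0"
    using norm_cauchy_schwarz[of dp ep] nep by (simp add: q_def) (metis mult_left_mono norm_ge_zero order_trans)
  moreover have "(d - e) \<bullet> (d - e) \<le> R1^2"
    using yc by (metis d_def e_def diff_diff_eq2 diff_add_cancel add_diff_cancel_right' norm_ge_zero power2_norm_eq_inner power_mono
        diff_diff_add)
  moreover have "(d - e) \<bullet> (d - e) = d \<bullet> d - 2 * (d \<bullet> e) + e \<bullet> e"
    by (simp add: inner_diff_left inner_diff_right inner_commute)
  moreover have "e \<bullet> e \<ge> b^2" using epep by (metis diff_ge_0_iff_ge inner_ge_zero)
  ultimately have ineq: "q^2 + t^2 \<le> l0^2 + 2*l0*q + 2*t*b"
    using q2 de b2 Rl by (simp add: algebra_simps)
  have bR: "b \<le> R1" using norm_cauchy_schwarz[of e \<nu>] nu cp by (simp add: b_def e_def)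
  have "t = (d - e) \<bullet> \<nu> + b" by (simp add: t_def b_def inner_diff_left)
  moreover have "(d - e) \<bullet> \<nu> \<le> R1"
    using norm_cauchy_schwarz[of "d - e" \<nu>] nu yc by (simp add: d_def e_def)
  ultimately have tR: "t \<le> 2*R1" using bR by linarith
  have t0: "t \<ge> 0" using ty by (simp add: t_def d_def)
  have "0 \<le> (2*(400*R1/359)*t - (q^2 + t^2))/4
      + ((20*l0)^2/2) * ln ((q^2 + t^2 + 2*(20*l0)*t + (20*l0)^2)/(20*l0)^2)"
    using core[OF t0 _ l0 bR tR ineq] by (simp add: q_def)
  moreover have "q^2 + t^2 = d \<bullet> d" using q2 by simp
  ultimately show ?thesis
    by (simp add: bv_eq[OF nn] d_def[symmetric] t_def[symmetric])
qed

lemma barrier_upper: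
  fixes p y \<nu> :: "real^2"
  assumes nu: "norm \<nu> = 1" and ty: "(y - p) \<bullet> \<nu> \<ge> 0" and s: "s > 0" and R: "R \<ge> 0"
  shows "bv (p + R *\<^sub>R \<nu>) (p - s *\<^sub>R \<nu>) R s y \<le> (R/2 + s) * norm (y - p) + norm (y - p)^2/2"
proof -
  have nn: "\<nu> \<bullet> \<nu> = 1" using nu by (simp add: dot_square_norm)
  have "bv (p + R *\<^sub>R \<nu>) (p - s *\<^sub>R \<nu>) R s y \<le> (R/2 + s) * ((y-p)\<bullet>\<nu>) + ((y-p)\<bullet>(y-p))/2"
    unfolding bv_eq[OF nn] by (rule upper_bd[OF ty _ s]) simp
  also have "(y-p)\<bullet>\<nu> \<le> norm (y - p)" using norm_cauchy_schwarz[of "y-p" \<nu>] nu by simp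
  hence "(R/2 + s) * ((y-p)\<bullet>\<nu>) \<le> (R/2 + s) * norm (y - p)" using R s by (intro mult_left_mono) auto
  hence "(R/2 + s) * ((y-p)\<bullet>\<nu>) + ((y-p)\<bullet>(y-p))/2 \<le> (R/2 + s) * norm (y - p) + norm (y - p)^2/2"
    by (simp add: power2_norm_eq_inner)
  finally show ?thesis .
qed



lemma area_ball2:
  assumes "r \<ge> 0" shows "measure lebesgue (ball (c::real^2) r) = r^2 * pi"
proof -
  have "measure lebesgue (ball (c::real^2) r) = measure lborel (ball c r)"
    by (intro measure_completion) simp
  thus ?thesis using circle_area[of r c] assms by simp
qed

lemma area_ge_ball:
  fixes S :: "(real^2) set"
  assumes "ball m \<kappa> \<subseteq> S" "bounded S" "S \<in> sets lebesgue" "\<kappa> \<ge> 0"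
  shows "\<kappa>^2 * pi \<le> measure lebesgue S"
proof -
  have "measure lebesgue (ball m \<kappa>) \<le> measure lebesgue S"
    by (rule measure_mono_fmeasurable[OF assms(1)])
       (auto intro: bounded_set_imp_lmeasurable assms)
  thus ?thesis using area_ball2[OF assms(4)] by simp
qed

lemma symdiff_meas:
  fixes \<Omega> :: "(real^2) set"
  assumes "open \<Omega>" "bounded \<Omega>"
  shows "bounded ((ball c \<rho> - \<Omega>) \<union> (\<Omega> - ball c \<rho>))"
    and "(ball c \<rho> - \<Omega>) \<union> (\<Omega> - ball c \<rho>) \<in> sets lebesgue"
proof -
  show "bounded ((ball c \<rho> - \<Omega>) \<union> (\<Omega> - ball c \<rho>))"
    using assms by (meson bounded_Un bounded_ball bounded_diff)
  have "\<Omega> \<in> sets lebesgue" using lmeasurable_open[OF assms(2,1)] by (simp add: fmeasurable_def)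
  moreover have "ball c \<rho> \<in> sets lebesgue" by simp
  ultimately show "(ball c \<rho> - \<Omega>) \<union> (\<Omega> - ball c \<rho>) \<in> sets lebesgue"
    by (intro sets.Un sets.Diff)
qed

lemma separate_point:
  fixes \<Omega> :: "(real^2) set"
  assumes "convex \<Omega>" "z \<notin> \<Omega>"
  obtains \<nu> where "norm \<nu> = 1" "\<And>x. x \<in> \<Omega> \<Longrightarrow> 0 \<le> \<nu> \<bullet> (x - z)"
proof -
  have "convex ((+) (- z) ` \<Omega>)" using assms(1) by (rule convex_translation)
  moreover have "0 \<notin> (+) (- z) ` \<Omega>" using assms(2) by auto
  ultimately obtain a where a: "a \<noteq> 0" "\<forall>x\<in>(+) (- z) ` \<Omega>. 0 \<le> a \<bullet> x"
    using separating_hyperplane_set_0 by blast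
  define \<nu> where "\<nu> = (1 / norm a) *\<^sub>R a"
  have "norm \<nu> = 1" using a(1) by (simp add: \<nu>_def)
  moreover have "0 \<le> \<nu> \<bullet> (x - z)" if "x \<in> \<Omega>" for x
  proof -
    have "0 \<le> a \<bullet> (- z + x)" using a(2) that by auto
    hence "a \<bullet> z \<le> a \<bullet> x" by (simp add: inner_diff_right algebra_simps)
    hence "a \<bullet> z / norm a \<le> a \<bullet> x / norm a" by (simp add: divide_right_mono)
    thus ?thesis by (simp add: \<nu>_def algebra_simps inner_diff_right)
  qed
  ultimately show ?thesis using that by blast
qed

lemma geom_inner:
  fixes \<Omega> :: "(real^2) set"
  assumes \<Omega>: "open \<Omega>" "convex \<Omega>" "bounded \<Omega>" and \<rho>: "\<rho> > 0" "pi*\<rho>^2 = 1" and \<eta>: "0 < \<eta>" "\<eta> < 1"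
    and small: "measure lebesgue ((ball c \<rho> - \<Omega>) \<union> (\<Omega> - ball c \<rho>)) < \<eta>^2/4"
  shows "ball c (\<rho>*(1-\<eta>)) \<subseteq> \<Omega>"
proof (rule subsetI, rule ccontr)
  fix z assume z: "z \<in> ball c (\<rho>*(1-\<eta>))" "z \<notin> \<Omega>"
  obtain \<nu> where nu: "norm \<nu> = 1" "\<And>x. x \<in> \<Omega> \<Longrightarrow> 0 \<le> \<nu> \<bullet> (x - z)"
    using separate_point[OF \<Omega>(2) z(2)] by blast
  define \<kappa> where "\<kappa> = \<rho>*\<eta>/2"
  define m where "m = c - (\<rho> - \<kappa>) *\<^sub>R \<nu>"
  have k: "0 \<le> \<kappa>" "\<kappa> \<le> \<rho>" using \<rho> \<eta> by (auto simp: \<kappa>_def)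
  have sub: "ball m \<kappa> \<subseteq> (ball c \<rho> - \<Omega>) \<union> (\<Omega> - ball c \<rho>)"
  proof
    fix y assume y: "y \<in> ball m \<kappa>"
    have dcm: "dist c m = \<rho> - \<kappa>" using nu k by (simp add: m_def dist_norm)
    have "dist c y \<le> dist c m + dist m y" by (rule dist_triangle)
    hence "dist c y < \<rho>" using dcm y by (simp add: dist_commute)
    moreover have "y \<notin> \<Omega>"
    proof
      assume "y \<in> \<Omega>"
      hence h: "0 \<le> \<nu> \<bullet> (y - z)" by (rule nu(2))
      have "\<nu> \<bullet> (y - z) = \<nu> \<bullet> (y - m) - (\<rho> - \<kappa>) + \<nu> \<bullet> (c - z)"
        using nu by (simp add: m_def inner_diff_right dot_square_norm)
      moreover have "\<nu> \<bullet> (y - m) \<le> norm (y - m)" using norm_cauchy_schwarz[of \<nu> "y - m"] nu by simp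
      moreover have "\<nu> \<bullet> (c - z) \<le> norm (c - z)" using norm_cauchy_schwarz[of \<nu> "c - z"] nu by simp
      moreover have "norm (y - m) < \<kappa>" using y by (simp add: dist_norm norm_minus_commute)
      moreover have "norm (c - z) < \<rho>*(1-\<eta>)" using z(1) by (simp add: dist_norm)
      ultimately have "\<nu> \<bullet> (y - z) < 2*\<kappa> - \<rho> + \<rho>*(1-\<eta>)" by linarith
      also have "\<dots> = 0" by (simp add: \<kappa>_def algebra_simps)
      finally show False using h by simp
    qed
    ultimately show "y \<in> (ball c \<rho> - \<Omega>) \<union> (\<Omega> - ball c \<rho>)" by simp
  qed
  have "\<kappa>^2 * pi \<le> measure lebesgue ((ball c \<rho> - \<Omega>) \<union> (\<Omega> - ball c \<rho>))"
    by (rule area_ge_ball[OF sub symdiff_meas[OF \<Omega>(1,3)] k(1)])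
  moreover have "\<kappa>^2 * pi = \<eta>^2/4 * (pi * \<rho>^2)" by (simp add: \<kappa>_def power2_eq_square)
  ultimately show False using small \<rho>(2) by simp
qed

lemma geom_outer:
  fixes \<Omega> :: "(real^2) set"
  assumes \<Omega>: "open \<Omega>" "convex \<Omega>" "bounded \<Omega>" and \<rho>: "\<rho> > 0" "pi*\<rho>^2 = 1" and \<eta>: "0 < \<eta>" "\<eta> < 1"
    and inner: "ball c (\<rho>*(1-\<eta>)) \<subseteq> \<Omega>"
    and small: "measure lebesgue ((ball c \<rho> - \<Omega>) \<union> (\<Omega> - ball c \<rho>)) < \<eta>^2*(1-\<eta>)^2/(4*(1+\<eta>)^2)"
    and q: "q \<in> \<Omega>"
  shows "norm (q - c) < \<rho>*(1+\<eta>)"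
proof (rule ccontr)
  assume "\<not> norm (q - c) < \<rho>*(1+\<eta>)"
  hence D: "norm (q - c) \<ge> \<rho>*(1+\<eta>)" by simp
  define D where "D = norm (q - c)"
  have "\<rho>*(1+\<eta>) > 0" using \<rho> \<eta> by simp
  hence Dp: "D > 0" using D unfolding D_def by linarith
  define e where "e = (1/D) *\<^sub>R (q - c)"
  have ne: "norm e = 1" using Dp by (simp add: e_def D_def)
  have cin: "c \<in> \<Omega>" using inner \<rho> \<eta> by auto
  define A where "A = \<rho>*(1+\<eta>)"
  define q' where "q' = c + A *\<^sub>R e"
  have "q' \<in> \<Omega>"
  proof -
    define \<mu> where "\<mu> = A / D"
    have mu: "0 \<le> \<mu>" "\<mu> \<le> 1" using D Dp \<rho> \<eta> by (auto simp: \<mu>_def A_def D_def)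
    have "q' = (1 - \<mu>) *\<^sub>R c + \<mu> *\<^sub>R q"
      using Dp by (simp add: q'_def e_def \<mu>_def algebra_simps)
    moreover have "(1 - \<mu>) *\<^sub>R c + \<mu> *\<^sub>R q \<in> \<Omega>"
      by (rule convexD[OF \<Omega>(2) cin q]) (use mu in auto)
    ultimately show ?thesis by simp
  qed
  define \<theta> where "\<theta> = \<eta>/(2*(1+\<eta>))"
  have th: "0 < \<theta>" "\<theta> < 1" using \<eta> by (auto simp: \<theta>_def field_simps)
  define B where "B = \<rho>*(1+\<eta>/2)"
  have AB: "(1 - \<theta>) * A = B" using \<eta> by (simp add: A_def B_def \<theta>_def field_simps)
  define m where "m = c + B *\<^sub>R e"
  define \<kappa> where "\<kappa> = \<theta>*\<rho>*(1-\<eta>)"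
  have k: "0 \<le> \<kappa>" "\<kappa> \<le> \<rho>*\<eta>/2" using th \<rho> \<eta>
    by (auto simp: \<kappa>_def \<theta>_def field_simps)
  have sub: "ball m \<kappa> \<subseteq> (ball c \<rho> - \<Omega>) \<union> (\<Omega> - ball c \<rho>)"
  proof
    fix y assume y: "y \<in> ball m \<kappa>"
    have ym: "norm (y - m) < \<kappa>" using y by (simp add: dist_norm norm_minus_commute)
    have "norm (m - c) = B" using ne \<rho> \<eta> by (simp add: m_def B_def)
    moreover have "norm (m - c) \<le> norm (y - c) + norm (y - m)"
    proof -
      have "m - c = (y - c) - (y - m)" by simp
      thus ?thesis using norm_triangle_ineq4[of "y - c" "y - m"] by simp
    qed
    ultimately have "norm (y - c) > \<rho>" using ym k by (simp add: B_def algebra_simps)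
    hence "y \<notin> ball c \<rho>" by (simp add: dist_norm norm_minus_commute)
    moreover have "y \<in> \<Omega>"
    proof -
      define w where "w = c + (1/\<theta>) *\<^sub>R (y - m)"
      have "norm (w - c) = norm (y - m) / \<theta>" using th by (simp add: w_def)
      also have "\<dots> < \<kappa> / \<theta>" using ym th by (simp add: divide_strict_right_mono)
      also have "\<dots> = \<rho>*(1-\<eta>)" using th by (simp add: \<kappa>_def)
      finally have "w \<in> \<Omega>" using inner by (auto simp: dist_norm norm_minus_commute)
      have "(1 - \<theta>) *\<^sub>R q' + \<theta> *\<^sub>R w = c + ((1 - \<theta>) * A) *\<^sub>R e + (y - m)"
        using th by (simp add: q'_def w_def algebra_simps)
      also have "\<dots> = y" unfolding AB by (simp add: m_def)
      finally have "y = (1 - \<theta>) *\<^sub>R q' + \<theta> *\<^sub>R w" by simp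
      moreover have "(1 - \<theta>) *\<^sub>R q' + \<theta> *\<^sub>R w \<in> \<Omega>"
        by (rule convexD[OF \<Omega>(2) \<open>q' \<in> \<Omega>\<close> \<open>w \<in> \<Omega>\<close>]) (use th in auto)
      ultimately show ?thesis by simp
    qed
    ultimately show "y \<in> (ball c \<rho> - \<Omega>) \<union> (\<Omega> - ball c \<rho>)" by simp
  qed
  have "\<kappa>^2 * pi \<le> measure lebesgue ((ball c \<rho> - \<Omega>) \<union> (\<Omega> - ball c \<rho>))"
    by (rule area_ge_ball[OF sub symdiff_meas[OF \<Omega>(1,3)] k(1)])
  moreover have "\<kappa>^2 * pi = \<eta>^2*(1-\<eta>)^2/(4*(1+\<eta>)^2) * (pi * \<rho>^2)"
    using \<eta> by (simp add: \<kappa>_def \<theta>_def power2_eq_square field_simps)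
  ultimately show False using small \<rho>(2) by simp
qed



lemma closure_split:
  assumes "open \<Omega>" "y \<in> closure \<Omega>" "y \<notin> \<Omega>"
  shows "y \<in> frontier \<Omega>"
  using assms by (simp add: frontier_def interior_open)

lemma frontier_not_in:
  assumes "open \<Omega>" "y \<in> frontier \<Omega>"
  shows "y \<notin> \<Omega>" "y \<in> closure \<Omega>"
  using assms by (auto simp: frontier_def interior_open)

lemma u_nonneg:
  assumes \<Omega>: "open \<Omega>" "bounded \<Omega>" and ts: "torsion_solution \<Omega> u g"
  shows "\<And>x. x \<in> closure \<Omega> \<Longrightarrow> u x \<ge> 0"
proof -
  obtain H where cu: "continuous_on (closure \<Omega>) u" and u0: "\<forall>x\<in>frontier \<Omega>. u x = 0"
    and du: "\<forall>x\<in>\<Omega>. (u has_derivative (\<lambda>h. g x \<bullet> h)) (at x)"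
    and dg: "\<forall>x\<in>\<Omega>. (g has_derivative H x) (at x)"
    and lap: "\<forall>x\<in>\<Omega>. - (\<Sum>i\<in>Basis. H x i \<bullet> i) = 1"
    using ts unfolding torsion_solution_def by blast
  have inn: "-u x \<le> 0" if "x \<in> \<Omega>" for x
  proof (rule max_principle[where f="\<lambda>x. - u x" and G="\<lambda>x. - g x" and K="\<lambda>x h. - H x h", OF \<Omega>])
    show "continuous_on (closure \<Omega>) (\<lambda>x. - u x)" by (intro continuous_intros cu)
    show "((\<lambda>x. - u x) has_derivative (\<lambda>h. - g x \<bullet> h)) (at x)" if "x \<in> \<Omega>" for x
      using has_derivative_minus[OF du[rule_format, OF that]] by simp
    show "((\<lambda>x. - g x) has_derivative (\<lambda>h. - H x h)) (at x)" if "x \<in> \<Omega>" for x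
      using has_derivative_minus[OF dg[rule_format, OF that]] by simp
    show "0 \<le> (\<Sum>i\<in>Basis. - H x i \<bullet> i)" if "x \<in> \<Omega>" for x
      using lap[rule_format, OF that] by (simp add: sum_negf)
    show "- u y \<le> 0" if "y \<in> frontier \<Omega>" for y using u0 that by simp
  qed (use that in simp)
  show "u x \<ge> 0" if "x \<in> closure \<Omega>" for x
  proof (cases "x \<in> \<Omega>")
    case True thus ?thesis using inn by force
  next
    case False thus ?thesis using u0 closure_split[OF \<Omega>(1) that False] by simp
  qed
qed

lemma halfspace_closure:
  assumes "\<And>x. x \<in> \<Omega> \<Longrightarrow> 0 \<le> \<nu> \<bullet> (x - p)" "y \<in> closure \<Omega>"
  shows "0 \<le> \<nu> \<bullet> (y - p)"
proof -
  have "closure \<Omega> \<subseteq> {x. \<nu> \<bullet> x \<ge> \<nu> \<bullet> p}"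
    using assms(1) by (intro closure_minimal) (auto simp: closed_halfspace_ge inner_diff_right)
  thus ?thesis using assms(2) by (auto simp: inner_diff_right)
qed

lemma barrier_bound:
  fixes \<Omega> :: "(real^2) set"
  assumes \<Omega>: "open \<Omega>" "convex \<Omega>" "bounded \<Omega>" and ts: "torsion_solution \<Omega> u g"
    and inB: "ball c b0 \<subseteq> \<Omega>" and outB: "\<And>q. q \<in> \<Omega> \<Longrightarrow> norm (q - c) < R1"
    and b0: "b0 > 0" and Rl: "R1^2 - b0^2 \<le> l0^2" and l0: "l0 > 0"
    and p: "p \<in> frontier \<Omega>" and y: "y \<in> \<Omega>"
  shows "u y \<le> (200*R1/359 + 20*l0) * norm (y - p) + norm (y - p)^2/2"
proof -
  obtain H where cu: "continuous_on (closure \<Omega>) u" and u0: "\<forall>x\<in>frontier \<Omega>. u x = 0"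
    and du: "\<forall>x\<in>\<Omega>. (u has_derivative (\<lambda>h. g x \<bullet> h)) (at x)"
    and dg: "\<forall>x\<in>\<Omega>. (g has_derivative H x) (at x)"
    and lap: "\<forall>x\<in>\<Omega>. - (\<Sum>i\<in>Basis. H x i \<bullet> i) = 1"
    using ts unfolding torsion_solution_def by blast
  have clB: "closure \<Omega> \<subseteq> cball c R1"
    using outB by (intro closure_minimal) (auto simp: dist_norm norm_minus_commute less_imp_le)
  have pn: "p \<notin> \<Omega>" and pc: "p \<in> closure \<Omega>" using frontier_not_in[OF \<Omega>(1) p] by auto
  obtain \<nu> where nu: "norm \<nu> = 1" "\<And>x. x \<in> \<Omega> \<Longrightarrow> 0 \<le> \<nu> \<bullet> (x - p)"
    using separate_point[OF \<Omega>(2) pn] by blast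
  have hc: "0 \<le> (x - p) \<bullet> \<nu>" if "x \<in> closure \<Omega>" for x
    using halfspace_closure[OF nu(2) that] by (simp add: inner_commute)
  have nn: "\<nu> \<bullet> \<nu> = 1" using nu(1) by (simp add: dot_square_norm)
  have "c - b0 *\<^sub>R \<nu> \<in> closure \<Omega>"
  proof -
    have "c - b0 *\<^sub>R \<nu> \<in> cball c b0" using nu(1) b0 by (simp add: dist_norm)
    also have "cball c b0 = closure (ball c b0)" using b0 by simp
    also have "\<dots> \<subseteq> closure \<Omega>" using inB by (rule closure_mono)
    finally show ?thesis .
  qed
  hence "0 \<le> (c - b0 *\<^sub>R \<nu> - p) \<bullet> \<nu>" by (rule hc)
  hence cb: "(c - p) \<bullet> \<nu> \<ge> b0" using nn by (simp add: inner_diff_left algebra_simps)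
  have "p \<in> cball c R1" using clB pc by blast
  hence cp: "norm (c - p) \<le> R1" by (simp add: dist_norm)
  have R1: "R1 \<ge> 0" using cp norm_ge_zero order_trans by blast
  define R' where "R' = 400*R1/359"
  define s where "s = 20*l0"
  have s: "s > 0" using l0 by (simp add: s_def)
  define z0 where "z0 = p - s *\<^sub>R \<nu>"
  have yz: "x \<noteq> z0" if "x \<in> closure \<Omega>" for x
  proof
    assume "x = z0"
    hence "(x - p) \<bullet> \<nu> = - s" using nn by (simp add: z0_def)
    thus False using hc[OF that] s by simp
  qed
  define v where "v = bv (p + R' *\<^sub>R \<nu>) z0 R' s"
  have vnn: "v x \<ge> 0" if "x \<in> closure \<Omega>" for x
    unfolding v_def R'_def z0_def s_def
    by (rule barrier_nonneg[OF nu(1) hc[OF that] _ cb less_imp_le[OF b0] cp Rl l0])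
       (use clB that in \<open>auto simp: dist_norm norm_minus_commute\<close>)
  have dv: "(v has_derivative (\<lambda>h. bG (p + R' *\<^sub>R \<nu>) z0 R' s x \<bullet> h)) (at x)"
     and dG: "(bG (p + R' *\<^sub>R \<nu>) z0 R' s has_derivative bK (p + R' *\<^sub>R \<nu>) z0 R' s x) (at x)"
     and tr: "(\<Sum>i\<in>Basis. bK (p + R' *\<^sub>R \<nu>) z0 R' s x i \<bullet> i) = -1"
    if "x \<in> closure \<Omega>" for x
    using bv_deriv[OF yz[OF that], of s] bG_deriv[OF yz[OF that], of s] bK_trace[OF yz[OF that]] s
    unfolding v_def by auto
  have cv: "continuous_on (closure \<Omega>) v"
    by (intro continuous_at_imp_continuous_on ballI has_derivative_continuous[OF dv]) 
  have "u y - v y \<le> 0"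
  proof (rule max_principle[where f="\<lambda>x. u x - v x" and G="\<lambda>x. g x - bG (p + R' *\<^sub>R \<nu>) z0 R' s x"
        and K="\<lambda>x h. H x h - bK (p + R' *\<^sub>R \<nu>) z0 R' s x h", OF \<Omega>(1,3)])
    show "continuous_on (closure \<Omega>) (\<lambda>x. u x - v x)" by (intro continuous_intros cu cv)
    show "((\<lambda>x. u x - v x) has_derivative (\<lambda>h. (g x - bG (p + R' *\<^sub>R \<nu>) z0 R' s x) \<bullet> h)) (at x)"
      if "x \<in> \<Omega>" for x
      using has_derivative_diff[OF du[rule_format, OF that] dv[OF subsetD[OF closure_subset that]]]
      by (simp add: inner_diff_left)
    show "((\<lambda>x. g x - bG (p + R' *\<^sub>R \<nu>) z0 R' s x) has_derivative
        (\<lambda>h. H x h - bK (p + R' *\<^sub>R \<nu>) z0 R' s x h)) (at x)" if "x \<in> \<Omega>" for x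
      using has_derivative_diff[OF dg[rule_format, OF that] dG[OF subsetD[OF closure_subset that]]] by simp
    show "0 \<le> (\<Sum>i\<in>Basis. (H x i - bK (p + R' *\<^sub>R \<nu>) z0 R' s x i) \<bullet> i)" if "x \<in> \<Omega>" for x
      using lap[rule_format, OF that] tr[OF subsetD[OF closure_subset that]]
      by (simp add: inner_diff_left sum_subtractf)
    show "u x - v x \<le> 0" if "x \<in> frontier \<Omega>" for x
      using u0 that vnn[of x] frontier_not_in[OF \<Omega>(1) that] by simp
  qed (use y in simp)
  moreover have "v y \<le> (R'/2 + s) * norm (y - p) + norm (y - p)^2/2"
    unfolding v_def z0_def
    by (rule barrier_upper[OF nu(1) hc[OF subsetD[OF closure_subset y]] s]) (simp add: R'_def R1)
  moreover have "R'/2 + s = 200*R1/359 + 20*l0" by (simp add: R'_def s_def)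
  ultimately show ?thesis by simp
qed

lemma translation_bound:
  fixes \<Omega> :: "(real^2) set"
  assumes \<Omega>: "open \<Omega>" "bounded \<Omega>" and ts: "torsion_solution \<Omega> u g"
    and bb: "\<And>p y. p \<in> frontier \<Omega> \<Longrightarrow> y \<in> \<Omega> \<Longrightarrow> u y \<le> L * norm (y - p) + norm (y - p)^2/2"
    and L: "L \<ge> 0"
    and x: "x \<in> \<Omega>" and xh: "x + h \<in> \<Omega>"
  shows "u (x + h) - u x \<le> L * norm h + norm h^2/2"
proof -
  obtain H where cu: "continuous_on (closure \<Omega>) u" and u0: "\<forall>x\<in>frontier \<Omega>. u x = 0"
    and du: "\<forall>x\<in>\<Omega>. (u has_derivative (\<lambda>h. g x \<bullet> h)) (at x)"
    and dg: "\<forall>x\<in>\<Omega>. (g has_derivative H x) (at x)"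
    and lap: "\<forall>x\<in>\<Omega>. - (\<Sum>i\<in>Basis. H x i \<bullet> i) = 1"
    using ts unfolding torsion_solution_def by blast
  have unn: "\<And>x. x \<in> closure \<Omega> \<Longrightarrow> u x \<ge> 0" by (rule u_nonneg[OF \<Omega> ts])
  define U where "U = \<Omega> \<inter> {y. y + h \<in> \<Omega>}"
  have T: "{y. y + h \<in> S} = (+) (- h) ` S" for S :: "(real^2) set"
    by (auto simp: image_iff) (metis add.commute diff_add_cancel uminus_add_conv_diff)
  have oU: "open U" unfolding U_def T using \<Omega>(1) by (intro open_Int open_translation) auto
  have bU: "bounded U" using \<Omega>(2) by (rule bounded_subset) (auto simp: U_def)
  have xU: "x \<in> U" using x xh by (simp add: U_def)
  have clU: "closure U \<subseteq> closure \<Omega> \<inter> {y. y + h \<in> closure \<Omega>}"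
  proof -
    have "closure U \<subseteq> closure \<Omega>" by (rule closure_mono) (auto simp: U_def)
    moreover have "closure U \<subseteq> {y. y + h \<in> closure \<Omega>}"
    proof (rule closure_minimal)
      show "closed {y. y + h \<in> closure \<Omega>}" unfolding T by (rule closed_translation) simp
      show "U \<subseteq> {y. y + h \<in> closure \<Omega>}" by (auto simp: U_def intro: subsetD[OF closure_subset])
    qed
    ultimately show ?thesis by blast
  qed
  have cf: "continuous_on (closure U) (\<lambda>y. u (y + h) - u y)"
  proof (intro continuous_on_diff)
    show "continuous_on (closure U) u" using cu clU continuous_on_subset by blast
    show "continuous_on (closure U) (\<lambda>y. u (y + h))"
      by (rule continuous_on_compose2[OF cu]) (use clU in \<open>auto intro!: continuous_intros\<close>)
  qed
  have dtr: "((\<lambda>y. y + h) has_derivative (\<lambda>k. k)) (at y)" for y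
    by (auto intro!: derivative_eq_intros)
  have "u (x + h) - u x \<le> L * norm h + norm h^2/2"
  proof (rule max_principle[where f="\<lambda>y. u (y + h) - u y" and G="\<lambda>y. g (y + h) - g y"
        and K="\<lambda>y k. H (y + h) k - H y k", OF oU bU cf])
    show "((\<lambda>y. u (y + h) - u y) has_derivative (\<lambda>k. (g (y + h) - g y) \<bullet> k)) (at y)" if "y \<in> U" for y
    proof -
      have "((u \<circ> (\<lambda>y. y + h)) has_derivative ((\<lambda>k. g (y + h) \<bullet> k) \<circ> (\<lambda>k. k))) (at y)"
        by (rule diff_chain_at[OF dtr]) (use du that in \<open>auto simp: U_def\<close>)
      from has_derivative_diff[OF this[unfolded o_def] du[rule_format, of y]] that
      show ?thesis by (simp add: U_def inner_diff_left)
    qed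
    show "((\<lambda>y. g (y + h) - g y) has_derivative (\<lambda>k. H (y + h) k - H y k)) (at y)" if "y \<in> U" for y
    proof -
      have "((g \<circ> (\<lambda>y. y + h)) has_derivative (H (y + h) \<circ> (\<lambda>k. k))) (at y)"
        by (rule diff_chain_at[OF dtr]) (use dg that in \<open>auto simp: U_def\<close>)
      from has_derivative_diff[OF this[unfolded o_def] dg[rule_format, of y]] that
      show ?thesis by (simp add: U_def)
    qed
    show "0 \<le> (\<Sum>i\<in>Basis. (H (y + h) i - H y i) \<bullet> i)" if "y \<in> U" for y
      using lap that by (simp add: U_def inner_diff_left sum_subtractf)
    show "u (y + h) - u y \<le> L * norm h + norm h^2/2" if yf: "y \<in> frontier U" for y
    proof -
      have yc: "y \<in> closure U" and ynU: "y \<notin> U" using frontier_not_in[OF oU yf] by auto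
      have y1: "y \<in> closure \<Omega>" and y2: "y + h \<in> closure \<Omega>" using clU yc by auto
      have M0: "0 \<le> L * norm h + norm h^2/2" using L by simp
      show ?thesis
      proof (cases "y + h \<in> \<Omega>")
        case False
        hence "u (y + h) = 0" using u0 closure_split[OF \<Omega>(1) y2 False] by simp
        thus ?thesis using unn[OF y1] M0 by simp
      next
        case True
        hence yn: "y \<notin> \<Omega>" using ynU by (simp add: U_def)
        have yF: "y \<in> frontier \<Omega>" by (rule closure_split[OF \<Omega>(1) y1 yn])
        hence "u y = 0" using u0 by simp
        moreover have "u (y + h) \<le> L * norm h + norm h^2/2" using bb[OF yF True] by simp
        ultimately show ?thesis by simp
      qed
    qed
  qed (rule xU)
  thus ?thesis .
qed

lemma grad_bound:
  fixes \<Omega> :: "(real^2) set"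
  assumes \<Omega>: "open \<Omega>" "bounded \<Omega>" and ts: "torsion_solution \<Omega> u g"
    and bb: "\<And>p y. p \<in> frontier \<Omega> \<Longrightarrow> y \<in> \<Omega> \<Longrightarrow> u y \<le> L * norm (y - p) + norm (y - p)^2/2"
    and L: "L \<ge> 0" and x: "x \<in> \<Omega>"
  shows "norm (g x) \<le> L"
proof (rule ccontr)
  assume "\<not> norm (g x) \<le> L"
  hence gL: "norm (g x) > L" by simp
  hence g0: "g x \<noteq> 0" using L by auto
  have du: "(u has_derivative (\<lambda>h. g x \<bullet> h)) (at x)"
    using ts x unfolding torsion_solution_def by blast
  define e where "e = (1 / norm (g x)) *\<^sub>R g x"
  have ne: "norm e = 1" using g0 by (simp add: e_def)
  have ge: "g x \<bullet> e = norm (g x)" using g0 by (simp add: e_def dot_square_norm power2_eq_square)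
  obtain \<delta> where \<delta>: "\<delta> > 0" "ball x \<delta> \<subseteq> \<Omega>" using \<Omega>(1) x open_contains_ball by blast
  define \<phi> where "\<phi> \<tau> = u (x + \<tau> *\<^sub>R e) - L * \<tau> - \<tau>^2/2" for \<tau>
  have dl: "((\<lambda>\<tau>. x + \<tau> *\<^sub>R e) has_derivative (\<lambda>t. t *\<^sub>R e)) (at 0)"
    by (auto intro!: derivative_eq_intros)
  have du0: "(u has_derivative (\<lambda>h. g x \<bullet> h)) (at (x + 0 *\<^sub>R e))" using du by simp
  have "((u \<circ> (\<lambda>\<tau>. x + \<tau> *\<^sub>R e)) has_derivative ((\<lambda>h. g x \<bullet> h) \<circ> (\<lambda>t. t *\<^sub>R e))) (at 0)"
    by (rule diff_chain_at[OF dl du0])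
  hence d1: "((\<lambda>\<tau>. u (x + \<tau> *\<^sub>R e)) has_derivative (\<lambda>t. t * norm (g x))) (at 0)"
    by (simp add: o_def ge)
  have "(\<phi> has_derivative (\<lambda>t. t * norm (g x) - L * t - t * 0)) (at 0)"
    unfolding \<phi>_def by (rule derivative_eq_intros d1 refl | simp)+
  hence "(\<phi> has_real_derivative (norm (g x) - L)) (at 0)"
    unfolding has_field_derivative_def by (rule has_derivative_eq_rhs) (auto simp: fun_eq_iff algebra_simps)
  hence "\<exists>d>0. \<forall>h>0. h < d \<longrightarrow> \<phi> 0 < \<phi> (0 + h)" by (rule DERIV_pos_inc_right) (use gL in simp)
  then obtain d where d: "d > 0" "\<And>h. h > 0 \<Longrightarrow> h < d \<Longrightarrow> \<phi> 0 < \<phi> h" by auto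
  define \<tau> where "\<tau> = min d \<delta> / 2"
  have tp: "\<tau> > 0" "\<tau> < d" "\<tau> < \<delta>" using d \<delta> by (auto simp: \<tau>_def)
  have "x + \<tau> *\<^sub>R e \<in> ball x \<delta>" using tp ne by (simp add: dist_norm)
  hence xin: "x + \<tau> *\<^sub>R e \<in> \<Omega>" using \<delta> by blast
  have "u (x + \<tau> *\<^sub>R e) - u x \<le> L * norm (\<tau> *\<^sub>R e) + norm (\<tau> *\<^sub>R e)^2/2"
    by (rule translation_bound[OF \<Omega> ts bb L x xin])
  hence "\<phi> \<tau> \<le> \<phi> 0" using tp ne by (simp add: \<phi>_def)
  thus False using d(2)[OF tp(1,2)] by simp
qed


lemma sqrt_pi_gt: "sqrt pi > 17/10"
proof -
  have "(17/10::real)^2 < pi" using pi_gt3 by (simp add: power2_eq_square)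
  thus ?thesis by (rule real_less_rsqrt)
qed

lemma last_conj: "(0.39::real) < 1 / sqrt (2 * pi)"
proof -
  have "2 * pi < (51/20::real)^2" using pi_approx(2) by (simp add: power2_eq_square)
  hence "sqrt (2 * pi) < sqrt ((51/20::real)^2)" by (rule real_sqrt_less_mono)
  hence s: "sqrt (2 * pi) < 51/20" by simp
  have sp: "sqrt (2 * pi) > 0" by simp
  have "(0.39::real) * sqrt (2 * pi) < 0.39 * (51/20)" using s by simp
  also have "\<dots> < 1" by simp
  finally show ?thesis using sp by (simp add: field_simps)
qed

theorem proposition1:
  shows "\<exists>\<epsilon>0::real. \<epsilon>0 > 0 \<and>
    (\<forall>(\<Omega>::(real^2) set) u g.
       open \<Omega> \<and> connected \<Omega> \<and> convex \<Omega> \<and> bounded \<Omega> \<and>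
       area \<Omega> = 1 \<and> fraenkel_asymmetry \<Omega> \<le> \<epsilon>0 \<and>
       torsion_solution \<Omega> u g
       \<longrightarrow> (\<forall>x\<in>\<Omega>. norm (g x) \<le> 0.39)) \<and>
    (0.39::real) < 1 / sqrt (2 * pi)"
proof (intro exI conjI allI impI)
  define \<eta> :: real where "\<eta> = 1/1000000"
  show "(\<eta>^2/16::real) > 0" by (simp add: \<eta>_def)
  show "(0.39::real) < 1 / sqrt (2 * pi)" by (rule last_conj)
  fix \<Omega> :: "(real^2) set" and u g
  assume A: "open \<Omega> \<and> connected \<Omega> \<and> convex \<Omega> \<and> bounded \<Omega> \<and>
       area \<Omega> = 1 \<and> fraenkel_asymmetry \<Omega> \<le> \<eta>^2/16 \<and> torsion_solution \<Omega> u g"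
  hence \<Omega>: "open \<Omega>" "convex \<Omega>" "bounded \<Omega>" and a1: "area \<Omega> = 1"
    and fa: "fraenkel_asymmetry \<Omega> \<le> \<eta>^2/16" and ts: "torsion_solution \<Omega> u g" by auto
  define \<rho> where "\<rho> = 1 / sqrt pi"
  have \<rho>: "\<rho> > 0" "pi * \<rho>^2 = 1" by (auto simp: \<rho>_def power_divide)
  define S where "S = { area ((B - \<Omega>) \<union> (\<Omega> - B)) / area \<Omega> | B.
             (\<exists>c r. r > 0 \<and> B = ball c r) \<and> area B = area \<Omega> }"
  have Sne: "S \<noteq> {}"
  proof -
    have "area (ball (0::real^2) \<rho>) = area \<Omega>" using area_ball2[of \<rho> 0] \<rho> a1 by (simp add: mult.commute)
    thus ?thesis unfolding S_def using \<rho>(1) by blast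
  qed
  have Sbd: "bdd_below S" unfolding S_def bdd_below_def
    by (rule exI[of _ 0]) (auto simp: a1)
  have "Inf S \<le> \<eta>^2/16" using fa by (simp add: fraenkel_asymmetry_def S_def[symmetric])
  moreover have "\<eta>^2/16 < \<eta>^2/8" by (simp add: \<eta>_def)
  ultimately have "Inf S < \<eta>^2/8" by linarith
  then obtain z where "z \<in> S" "z < \<eta>^2/8" using cInf_lessD[OF Sne] by blast
  then obtain c r where r: "r > 0" and ar: "area (ball c r) = 1"
    and sm: "area ((ball c r - \<Omega>) \<union> (\<Omega> - ball c r)) < \<eta>^2/8"
    unfolding S_def using a1 by auto
  have "r^2 * pi = \<rho>^2 * pi" using area_ball2[of r c] r ar \<rho>(2) by (simp add: mult.commute)
  hence "r^2 = \<rho>^2" by simp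
  hence "r = \<rho>" using r \<rho>(1) by (simp add: power2_eq_iff_nonneg)
  hence sm: "area ((ball c \<rho> - \<Omega>) \<union> (\<Omega> - ball c \<rho>)) < \<eta>^2/8" using sm by simp
  have e: "0 < \<eta>" "\<eta> < 1" by (auto simp: \<eta>_def)
  have n1: "\<eta>^2/8 \<le> \<eta>^2/4" by (simp add: \<eta>_def power2_eq_square)
  have n2: "\<eta>^2/8 \<le> \<eta>^2*(1-\<eta>)^2/(4*(1+\<eta>)^2)" by (simp add: \<eta>_def power2_eq_square)
  have inB: "ball c (\<rho>*(1-\<eta>)) \<subseteq> \<Omega>"
    by (rule geom_inner[OF \<Omega> \<rho> e]) (use sm n1 in linarith)
  have outB: "norm (q - c) < \<rho>*(1+\<eta>)" if "q \<in> \<Omega>" for q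
    by (rule geom_outer[OF \<Omega> \<rho> e inB _ that]) (use sm n2 in linarith)
  define l0 :: real where "l0 = 12/10000"
  have b0: "\<rho>*(1-\<eta>) > 0" using \<rho> by (simp add: \<eta>_def)
  have Rl: "(\<rho>*(1+\<eta>))^2 - (\<rho>*(1-\<eta>))^2 \<le> l0^2"
  proof -
    have "(\<rho>*(1+\<eta>))^2 - (\<rho>*(1-\<eta>))^2 = 4*\<eta>*\<rho>^2" by (simp add: power2_eq_square algebra_simps)
    also have "\<rho>^2 = 1/pi" using \<rho>(2) by (simp add: field_simps)
    also have "4*\<eta>*(1/pi) \<le> 4*\<eta>*(1/3)" using pi_gt3 by (intro mult_left_mono) (auto simp: \<eta>_def field_simps)
    also have "\<dots> \<le> l0^2" by (simp add: \<eta>_def l0_def power2_eq_square)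
    finally show ?thesis .
  qed
  have l0p: "l0 > 0" by (simp add: l0_def)
  define L where "L = 200*(\<rho>*(1+\<eta>))/359 + 20*l0"
  have L0: "L \<ge> 0" using \<rho> by (simp add: L_def l0_def \<eta>_def)
  have bb: "u y \<le> L * norm (y - p) + norm (y - p)^2/2" if "p \<in> frontier \<Omega>" "y \<in> \<Omega>" for p y
    unfolding L_def
    using barrier_bound[OF \<Omega> ts inB outB b0 Rl l0p that] by simp
  have "L \<le> 0.39"
  proof -
    have "\<rho> < 10/17" using sqrt_pi_gt by (simp add: \<rho>_def field_simps)
    thus ?thesis by (simp add: L_def l0_def \<eta>_def)
  qed
  show "\<forall>x\<in>\<Omega>. norm (g x) \<le> 0.39"
    using grad_bound[OF \<Omega>(1,3) ts bb L0] \<open>L \<le> 0.39\<close> by force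
qed

end
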